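(* In Model A below, let $I:=-\inf_{t\in\mathbb{R}}\log\big(\varrho(1-\varrho)e^{t}+\tfrac12+\tfrac12(1-2\varrho+2\varrho^2)e^{-t}\big)$. Then $I>0$ and $$\lim_{d\to\infty,\ d\text{ odd}}\frac1d\log\mathbb{P}\big(\chi(w)=2\text{ under the $c$-segmentation rule with }c=1\big)=-I,$$ while for every sequence $c=c(d)$ with $c\mid d$, $c$ and $d/c$ odd, $c\to\infty$ and $c/d\to0$, $$\lim_{d\to\infty}\frac1d\log\mathbb{P}\big(\chi(w)=2\text{ under the $c$-segmentation rule}\big)=-\tfrac{I}{2}.$$
   Context: Segmentation rule. Let $d,c$ be positive integers with $c\mid d$. For $x\in\mathbb{R}^d$ and $1\le j\le c$ let $x_j\in\mathbb{R}^{d/c}$ denote its $j$-th block $(x_{(j-1)d/c+1},\dots,x_{jd/c})$, so that $x=x_1\circ\cdots\circ x_c$ (concatenation). Given dictionary words $w^1,\dots,w^K\in\mathbb{R}^d$ ($w^k$ representing class $k$) and a test word $w\in\mathbb{R}^d$, for each $j$ let $U_j\in\{1,\dots,K\}$ be an index $k$ minimizing the Euclidean distance $\|w_j-w^k_j\|$ in $\mathbb{R}^{d/c}$, chosen uniformly at random among all minimizers (independently of everything else). The $c$-segmentation rule assigns to $w$ the class $\chi(w)\in\operatorname{argmax}_k\#\{j:U_j=k\}$, chosen uniformly at random among all maximizers. The case $c=1$ is the Euclidean (nearest-neighbour) rule and $c=d$ is coordinate-by-coordinate comparison. Probabilities are over all random objects including tie-breaks. Model A. Fix $\varrho\in(0,\tfrac12)$.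 Let $m_1,m_2$ be independent and uniformly distributed on $\{-1,+1\}^d$. Let $Y^{(0)},Y^{(1)},Y^{(2)}$ be independent random vectors in $\{-1,+1\}^d$, independent of $m_1,m_2$, each with i.i.d. coordinates satisfying $\mathbb{P}(Y_i=1)=1-\varrho$, $\mathbb{P}(Y_i=-1)=\varrho$. Write $x\times y$ for the coordinatewise product. There are $K=2$ classes; the dictionary words are $w^1=Y^{(1)}\times m_1$ (class 1) and $w^2=Y^{(2)}\times m_2$ (class 2), and the test word is $w=Y^{(0)}\times m_1$ (true class 1). *)

theory Defs
  imports "HOL-Probability.Probability"
begin

text \<open>Words in R^d are represented as functions nat => real, coordinates 0..d-1.
  Block j (1 <= j <= c) consists of the coordinates (j-1)*(d div c) ..< j*(d div c).\<close>

type_synonym word = "nat \<Rightarrow> real"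

definition block_dist :: "nat \<Rightarrow> nat \<Rightarrow> word \<Rightarrow> word \<Rightarrow> nat \<Rightarrow> real" where
  "block_dist d c x y j =
     sqrt (\<Sum>i\<in>{(j - 1) * (d div c) ..< j * (d div c)}. (x i - y i)^2)"

text \<open>Classes are 1..K; the dictionary W maps class k to the word w^k.
  Set of nearest classes for block j.\<close>
definition block_argmin :: "nat \<Rightarrow> nat \<Rightarrow> nat \<Rightarrow> (nat \<Rightarrow> word) \<Rightarrow> word \<Rightarrow> nat \<Rightarrow> nat set" where
  "block_argmin d c K W w j =
     {k\<in>{1..K}. \<forall>k'\<in>{1..K}. block_dist d c w (W k) j \<le> block_dist d c w (W k') j}"

definition vote_count :: "nat \<Rightarrow> (nat \<Rightarrow> nat) \<Rightarrow> nat \<Rightarrow> nat" where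
  "vote_count c U k = card {j\<in>{1..c}. U j = k}"

definition vote_argmax :: "nat \<Rightarrow> nat \<Rightarrow> (nat \<Rightarrow> nat) \<Rightarrow> nat set" where
  "vote_argmax c K U = {k\<in>{1..K}. \<forall>k'\<in>{1..K}. vote_count c U k' \<le> vote_count c U k}"

text \<open>The c-segmentation rule: distribution of the assigned class chi(w), including the
  independent uniform tie-breaks.\<close>
definition seg_rule :: "nat \<Rightarrow> nat \<Rightarrow> nat \<Rightarrow> (nat \<Rightarrow> word) \<Rightarrow> word \<Rightarrow> nat pmf" where
  "seg_rule d c K W w =
     do { U \<leftarrow> Pi_pmf {1..c} 0 (\<lambda>j. pmf_of_set (block_argmin d c K W w j));
          pmf_of_set (vote_argmax c K U) }"

definition unif_sign_vec :: "nat \<Rightarrow> word pmf" where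
  "unif_sign_vec d = Pi_pmf {..<d} 0 (\<lambda>_. pmf_of_set {-1, 1})"

definition noise_vec :: "real \<Rightarrow> nat \<Rightarrow> word pmf" where
  "noise_vec \<rho> d = Pi_pmf {..<d} 0
     (\<lambda>_. map_pmf (\<lambda>b. if b then 1 else -1) (bernoulli_pmf (1 - \<rho>)))"

definition coord_prod :: "word \<Rightarrow> word \<Rightarrow> word" where
  "coord_prod x y = (\<lambda>i. x i * y i)"

definition modelA_err :: "real \<Rightarrow> nat \<Rightarrow> nat \<Rightarrow> real" where
  "modelA_err \<rho> d c = pmf
     (do { m1 \<leftarrow> unif_sign_vec d;
           m2 \<leftarrow> unif_sign_vec d;
           Y0 \<leftarrow> noise_vec \<rho> d;
           Y1 \<leftarrow> noise_vec \<rho> d;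
           Y2 \<leftarrow> noise_vec \<rho> d;
           seg_rule d c 2
             (\<lambda>k. if k = 1 then coord_prod Y1 m1 else coord_prod Y2 m2)
             (coord_prod Y0 m1) }) 2"

definition rate_I :: "real \<Rightarrow> real" where
  "rate_I \<rho> = - (INF t::real. ln (\<rho> * (1 - \<rho>) * exp t + 1/2
                        + 1/2 * (1 - 2*\<rho> + 2*\<rho>^2) * exp (-t)))"

end

theory Submission
  imports Defs
begin

definition U1 :: "real pmf" where "U1 = pmf_of_set {-1, 1}"

lemma sign_xor:
  assumes "u \<in> {-1, 1::real}" "v \<in> {-1, 1::real}"
  shows "map_pmf (\<lambda>b. u \<noteq> v * b) U1 = bernoulli_pmf (1/2)"
proof -
  have inj: "inj_on (\<lambda>b. u \<noteq> v * b) {-1, 1}" using assms by (auto simp: inj_on_def)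
  have im: "(\<lambda>b. u \<noteq> v * b) ` {-1, 1} = UNIV" using assms by auto
  have "map_pmf (\<lambda>b. u \<noteq> v * b) U1 = pmf_of_set ((\<lambda>b. u \<noteq> v * b) ` {-1, 1})"
    unfolding U1_def by (rule map_pmf_of_set_inj[OF inj]) auto
  also have "\<dots> = bernoulli_pmf (1/2)" unfolding im bernoulli_pmf_half_conv_pmf_of_set ..
  finally show ?thesis .
qed
definition NZ :: "real \<Rightarrow> real pmf" where
  "NZ \<rho> = map_pmf (\<lambda>b. if b then 1 else -1) (bernoulli_pmf (1 - \<rho>))"

lemma noise_xor:
  assumes "0 \<le> \<rho>" "\<rho> \<le> 1"
  shows "do {c \<leftarrow> NZ \<rho>; e \<leftarrow> NZ \<rho>; return_pmf (c \<noteq> e)} = bernoulli_pmf (2*\<rho>*(1-\<rho>))"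
proof (rule pmf_eqI)
  fix x :: bool
  have r0: "0 \<le> 2*\<rho>*(1-\<rho>)" using assms by simp
  have r1: "2*\<rho>*(1-\<rho>) \<le> 1" proof - have "0 \<le> (2*\<rho>-1)^2" by simp thus ?thesis by (simp add: power2_eq_square algebra_simps) qed
  have e: "do {c \<leftarrow> NZ \<rho>; e \<leftarrow> NZ \<rho>; return_pmf (c \<noteq> e)} =
     do {c \<leftarrow> bernoulli_pmf (1 - \<rho>); e \<leftarrow> bernoulli_pmf (1 - \<rho>); return_pmf (c \<noteq> e)}"
    unfolding NZ_def bind_map_pmf by (intro bind_pmf_cong refl) auto
  show "pmf (do {c \<leftarrow> NZ \<rho>; e \<leftarrow> NZ \<rho>; return_pmf (c \<noteq> e)}) x = pmf (bernoulli_pmf (2*\<rho>*(1-\<rho>))) x"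
    unfolding e using assms r0 r1
    by (cases x) (simp_all add: pmf_bind algebra_simps)
qed

lemma set_U1: "set_pmf U1 = {-1, 1}"
  unfolding U1_def by simp

lemma set_NZ: "set_pmf (NZ \<rho>) \<subseteq> {-1, 1}"
  unfolding NZ_def by auto

definition J5 :: "real \<Rightarrow> (real \<times> real \<times> real \<times> real \<times> real) pmf" where
  "J5 \<rho> = do {a \<leftarrow> U1; b \<leftarrow> U1; c \<leftarrow> NZ \<rho>; e \<leftarrow> NZ \<rho>; g \<leftarrow> NZ \<rho>; return_pmf (a,b,c,e,g)}"

definition kd :: "real \<times> real \<times> real \<times> real \<times> real \<Rightarrow> bool \<times> bool" where
  "kd t = (case t of (a,b,c,e,g) \<Rightarrow> (c \<noteq> e, c*a \<noteq> g*b))"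

lemma map_kd_J5:
  assumes "0 \<le> \<rho>" "\<rho> \<le> 1"
  shows "map_pmf kd (J5 \<rho>) = pair_pmf (bernoulli_pmf (2*\<rho>*(1-\<rho>))) (bernoulli_pmf (1/2))"
proof -
  have "map_pmf kd (J5 \<rho>) = do {a \<leftarrow> U1; b \<leftarrow> U1; c \<leftarrow> NZ \<rho>; e \<leftarrow> NZ \<rho>; g \<leftarrow> NZ \<rho>; return_pmf (c \<noteq> e, c*a \<noteq> g*b)}"
    unfolding J5_def kd_def map_bind_pmf map_return_pmf by simp
  also have "\<dots> = do {a \<leftarrow> U1; c \<leftarrow> NZ \<rho>; e \<leftarrow> NZ \<rho>; g \<leftarrow> NZ \<rho>; b \<leftarrow> U1; return_pmf (c \<noteq> e, c*a \<noteq> g*b)}"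
    apply (rule bind_pmf_cong[OF refl])
    apply (subst bind_commute_pmf)
    apply (rule bind_pmf_cong[OF refl])
    apply (subst bind_commute_pmf)
    apply (rule bind_pmf_cong[OF refl])
    apply (subst bind_commute_pmf)
    apply (rule refl)
    done
  also have "\<dots> = do {a \<leftarrow> U1; c \<leftarrow> NZ \<rho>; e \<leftarrow> NZ \<rho>; g \<leftarrow> NZ \<rho>; map_pmf (\<lambda>y. (c \<noteq> e, y)) (bernoulli_pmf (1/2))}"
  proof (intro bind_pmf_cong refl)
    fix a c e g assume h: "a \<in> set_pmf U1" "c \<in> set_pmf (NZ \<rho>)" "g \<in> set_pmf (NZ \<rho>)"
    have "do {b \<leftarrow> U1; return_pmf (c \<noteq> e, c*a \<noteq> g*b)} = map_pmf (\<lambda>y. (c \<noteq> e, y)) (map_pmf (\<lambda>b. c*a \<noteq> g*b) U1)"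
      by (simp add: map_pmf_def bind_assoc_pmf bind_return_pmf)
    also have "map_pmf (\<lambda>b. c*a \<noteq> g*b) U1 = bernoulli_pmf (1/2)"
      using h set_NZ[of \<rho>] by (intro sign_xor) (auto simp: set_U1)
    finally show "do {b \<leftarrow> U1; return_pmf (c \<noteq> e, c*a \<noteq> g*b)} = map_pmf (\<lambda>y. (c \<noteq> e, y)) (bernoulli_pmf (1/2))" .
  qed
  also have "\<dots> = do {c \<leftarrow> NZ \<rho>; e \<leftarrow> NZ \<rho>; map_pmf (\<lambda>y. (c \<noteq> e, y)) (bernoulli_pmf (1/2))}"
    by (simp only: bind_pmf_const)
  also have "\<dots> = do {x \<leftarrow> do {c \<leftarrow> NZ \<rho>; e \<leftarrow> NZ \<rho>; return_pmf (c \<noteq> e)}; map_pmf (\<lambda>y. (x, y)) (bernoulli_pmf (1/2))}"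
    by (simp only: bind_assoc_pmf bind_return_pmf)
  also have "\<dots> = pair_pmf (bernoulli_pmf (2*\<rho>*(1-\<rho>))) (bernoulli_pmf (1/2))"
    unfolding noise_xor[OF assms] pair_pmf_def map_pmf_def ..
  finally show ?thesis .
qed

lemma Pi5:
  assumes "finite A"
  shows "Pi_pmf A dflt (\<lambda>_. J5 \<rho>) =
    do {m1 \<leftarrow> Pi_pmf A 0 (\<lambda>_. U1); m2 \<leftarrow> Pi_pmf A 0 (\<lambda>_. U1);
        y0 \<leftarrow> Pi_pmf A 0 (\<lambda>_. NZ \<rho>); y1 \<leftarrow> Pi_pmf A 0 (\<lambda>_. NZ \<rho>); y2 \<leftarrow> Pi_pmf A 0 (\<lambda>_. NZ \<rho>);
        return_pmf (\<lambda>x. if x \<in> A then (m1 x, m2 x, y0 x, y1 x, y2 x) else dflt)}"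
  unfolding J5_def using assms
  by (simp add: Pi_pmf_bind[where d'="0::real"])


definition blk :: "nat \<Rightarrow> nat \<Rightarrow> nat \<Rightarrow> nat set" where
  "blk d c j = {(j - 1) * (d div c) ..< j * (d div c)}"

definition argset :: "nat \<Rightarrow> nat \<Rightarrow> nat set" where
  "argset n1 n2 = (if n1 < n2 then {1} else if n2 < n1 then {2} else {1,2})"

definition Gd :: "nat \<Rightarrow> nat \<Rightarrow> (nat \<Rightarrow> bool \<times> bool) \<Rightarrow> nat pmf" where
  "Gd d c \<delta> = do {U \<leftarrow> Pi_pmf {1..c} 0 (\<lambda>j. pmf_of_set (argset (card {i\<in>blk d c j. fst (\<delta> i)})
                                                      (card {i\<in>blk d c j. snd (\<delta> i)})));
                  pmf_of_set (vote_argmax c 2 U)}"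

lemma sq_pm: "a \<in> {-1,1::real} \<Longrightarrow> b \<in> {-1,1} \<Longrightarrow> (a - b)^2 = (if a \<noteq> b then 4 else 0)"
  by auto

lemma sum_if4: "finite A \<Longrightarrow> (\<Sum>i\<in>A. if P i then (4::real) else 0) = 4 * real (card {i\<in>A. P i})"
  by (simp add: sum.inter_filter[symmetric])

lemma blk_sub: "c dvd d \<Longrightarrow> j \<le> c \<Longrightarrow> blk d c j \<subseteq> {..<d}"
proof
  fix i assume "c dvd d" "j \<le> c" "i \<in> blk d c j"
  then have "i < j * (d div c)" by (simp add: blk_def)
  also have "\<dots> \<le> c * (d div c)" using \<open>j \<le> c\<close> by simp
  also have "\<dots> = d" using \<open>c dvd d\<close> by simp
  finally show "i \<in> {..<d}" by simp
qed

lemma block_argmin_eq: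
  fixes m1 m2 y0 y1 y2 :: word
  assumes "c dvd d" "j \<in> {1..c}"
    and pm: "\<And>i. i < d \<Longrightarrow> m1 i \<in> {-1,1} \<and> m2 i \<in> {-1,1} \<and> y0 i \<in> {-1,1} \<and> y1 i \<in> {-1,1} \<and> y2 i \<in> {-1,1}"
  shows "block_argmin d c 2 (\<lambda>k. if k = 1 then coord_prod y1 m1 else coord_prod y2 m2) (coord_prod y0 m1) j
       = argset (card {i\<in>blk d c j. y0 i \<noteq> y1 i}) (card {i\<in>blk d c j. y0 i * m1 i \<noteq> y2 i * m2 i})"
proof -
  have sub: "blk d c j \<subseteq> {..<d}" using assms by (intro blk_sub) auto
  have fin: "finite (blk d c j)" by (simp add: blk_def)
  define n1 where "n1 = card {i\<in>blk d c j. y0 i \<noteq> y1 i}"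
  define n2 where "n2 = card {i\<in>blk d c j. y0 i * m1 i \<noteq> y2 i * m2 i}"
  have d1: "block_dist d c (coord_prod y0 m1) (coord_prod y1 m1) j = sqrt (4 * real n1)"
  proof -
    have "(\<Sum>i\<in>blk d c j. (coord_prod y0 m1 i - coord_prod y1 m1 i)^2)
        = (\<Sum>i\<in>blk d c j. if y0 i \<noteq> y1 i then (4::real) else 0)"
    proof (intro sum.cong refl)
      fix i assume "i \<in> blk d c j"
      then have "i < d" using sub by auto
      then have h: "m1 i \<in> {-1,1}" "y0 i \<in> {-1,1}" "y1 i \<in> {-1,1}" using pm by auto
      then have "(y0 i * m1 i - y1 i * m1 i)^2 = (if y0 i * m1 i \<noteq> y1 i * m1 i then 4 else 0)"
        by (intro sq_pm) auto
      also have "(y0 i * m1 i \<noteq> y1 i * m1 i) = (y0 i \<noteq> y1 i)" using h by auto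
      finally show "(coord_prod y0 m1 i - coord_prod y1 m1 i)^2 = (if y0 i \<noteq> y1 i then (4::real) else 0)"
        by (simp add: coord_prod_def)
    qed
    then show ?thesis unfolding block_dist_def n1_def using sum_if4[OF fin] by (simp add: blk_def)
  qed
  have d2: "block_dist d c (coord_prod y0 m1) (coord_prod y2 m2) j = sqrt (4 * real n2)"
  proof -
    have "(\<Sum>i\<in>blk d c j. (coord_prod y0 m1 i - coord_prod y2 m2 i)^2)
        = (\<Sum>i\<in>blk d c j. if y0 i * m1 i \<noteq> y2 i * m2 i then (4::real) else 0)"
    proof (intro sum.cong refl)
      fix i assume "i \<in> blk d c j"
      then have "i < d" using sub by auto
      then have h: "m1 i \<in> {-1,1}" "m2 i \<in> {-1,1}" "y0 i \<in> {-1,1}" "y2 i \<in> {-1,1}" using pm by auto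
      then show "(coord_prod y0 m1 i - coord_prod y2 m2 i)^2 = (if y0 i * m1 i \<noteq> y2 i * m2 i then (4::real) else 0)"
        unfolding coord_prod_def by (intro sq_pm) auto
    qed
    then show ?thesis unfolding block_dist_def n2_def using sum_if4[OF fin] by (simp add: blk_def)
  qed
  have blkeq: "blk d c j = {(j - 1) * (d div c) ..< j * (d div c)}" by (simp add: blk_def)
  have e12: "{1..2::nat} = {1,2}" by auto
  show ?thesis
    unfolding block_argmin_def n1_def[symmetric] n2_def[symmetric] e12
    using d1 d2 by (auto simp: argset_def)
qed


lemma supp_vec:
  fixes d :: nat and f :: word
  assumes "f \<in> set_pmf (Pi_pmf {..<d} (0::real) (\<lambda>_. P))" "set_pmf P \<subseteq> {-1,1}" "i < d"
  shows "f i \<in> {-1,1}"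
proof -
  have "f \<in> PiE_dflt {..<d} 0 (set_pmf \<circ> (\<lambda>_. P))" using subsetD[OF set_Pi_pmf_subset'[OF finite_lessThan] assms(1)] by (simp add: o_def)
  then have "f i \<in> set_pmf P" using assms(3) by (auto simp: PiE_dflt_def)
  then show ?thesis using assms(2) by auto
qed

lemma seg_rule_eq:
  fixes m1 m2 y0 y1 y2 :: word
  assumes "c dvd d"
    and pm: "\<And>i. i < d \<Longrightarrow> m1 i \<in> {-1,1} \<and> m2 i \<in> {-1,1} \<and> y0 i \<in> {-1,1} \<and> y1 i \<in> {-1,1} \<and> y2 i \<in> {-1,1}"
  shows "seg_rule d c 2 (\<lambda>k. if k = 1 then coord_prod y1 m1 else coord_prod y2 m2) (coord_prod y0 m1)
       = Gd d c (\<lambda>i. kd (if i \<in> {..<d} then (m1 i, m2 i, y0 i, y1 i, y2 i) else dflt))"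
  unfolding seg_rule_def Gd_def
proof (intro bind_pmf_cong refl Pi_pmf_cong)
  fix j assume j: "j \<in> {1..c}"
  have sub: "blk d c j \<subseteq> {..<d}" using assms j by (intro blk_sub) auto
  have e1: "{i\<in>blk d c j. fst (kd (if i \<in> {..<d} then (m1 i, m2 i, y0 i, y1 i, y2 i) else dflt))}
      = {i\<in>blk d c j. y0 i \<noteq> y1 i}" using sub by (auto simp: kd_def)
  have e2: "{i\<in>blk d c j. snd (kd (if i \<in> {..<d} then (m1 i, m2 i, y0 i, y1 i, y2 i) else dflt))}
      = {i\<in>blk d c j. y0 i * m1 i \<noteq> y2 i * m2 i}" using sub by (auto simp: kd_def)
  show "pmf_of_set (block_argmin d c 2 (\<lambda>k. if k = 1 then coord_prod y1 m1 else coord_prod y2 m2) (coord_prod y0 m1) j) =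
         pmf_of_set (argset (card {i \<in> blk d c j. fst (kd (if i \<in> {..<d} then (m1 i, m2 i, y0 i, y1 i, y2 i) else dflt))})
                            (card {i \<in> blk d c j. snd (kd (if i \<in> {..<d} then (m1 i, m2 i, y0 i, y1 i, y2 i) else dflt))}))"
    unfolding e1 e2 using block_argmin_eq[OF assms(1) j pm] by simp
qed

definition Dp :: "real \<Rightarrow> (bool \<times> bool) pmf" where
  "Dp \<rho> = pair_pmf (bernoulli_pmf (2*\<rho>*(1-\<rho>))) (bernoulli_pmf (1/2))"

lemma modelA_reduce:
  assumes "c dvd d" "0 \<le> \<rho>" "\<rho> \<le> 1"
  shows "modelA_err \<rho> d c = pmf (Pi_pmf {..<d} (False,False) (\<lambda>_. Dp \<rho>) \<bind> Gd d c) 2"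
proof -
  define dflt :: "real \<times> real \<times> real \<times> real \<times> real" where "dflt = (1,1,1,1,1)"
  have us: "unif_sign_vec d = Pi_pmf {..<d} 0 (\<lambda>_. U1)" by (simp add: unif_sign_vec_def U1_def)
  have ns: "noise_vec \<rho> d = Pi_pmf {..<d} 0 (\<lambda>_. NZ \<rho>)" by (simp add: noise_vec_def NZ_def)
  have "modelA_err \<rho> d c = pmf (do {m1 \<leftarrow> Pi_pmf {..<d} 0 (\<lambda>_. U1); m2 \<leftarrow> Pi_pmf {..<d} 0 (\<lambda>_. U1);
        y0 \<leftarrow> Pi_pmf {..<d} 0 (\<lambda>_. NZ \<rho>); y1 \<leftarrow> Pi_pmf {..<d} 0 (\<lambda>_. NZ \<rho>); y2 \<leftarrow> Pi_pmf {..<d} 0 (\<lambda>_. NZ \<rho>);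
        Gd d c (\<lambda>i. kd (if i \<in> {..<d} then (m1 i, m2 i, y0 i, y1 i, y2 i) else dflt))}) 2"
    unfolding modelA_err_def us ns
  proof (intro arg_cong2[where f=pmf] refl bind_pmf_cong seg_rule_eq assms(1))
    fix m1 m2 y0 y1 y2 i
    assume h: "m1 \<in> set_pmf (Pi_pmf {..<d} 0 (\<lambda>_. U1))" "m2 \<in> set_pmf (Pi_pmf {..<d} 0 (\<lambda>_. U1))"
      "y0 \<in> set_pmf (Pi_pmf {..<d} 0 (\<lambda>_. NZ \<rho>))" "y1 \<in> set_pmf (Pi_pmf {..<d} 0 (\<lambda>_. NZ \<rho>))"
      "y2 \<in> set_pmf (Pi_pmf {..<d} 0 (\<lambda>_. NZ \<rho>))" "i < d"
    show "m1 i \<in> {-1,1} \<and> m2 i \<in> {-1,1} \<and> y0 i \<in> {-1,1} \<and> y1 i \<in> {-1,1} \<and> y2 i \<in> {-1,1}"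
      using supp_vec[OF h(1) _ h(6)] supp_vec[OF h(2) _ h(6)] supp_vec[OF h(3) _ h(6)]
        supp_vec[OF h(4) _ h(6)] supp_vec[OF h(5) _ h(6)] set_U1 set_NZ[of \<rho>] by auto
  qed
  also have "\<dots> = pmf (Pi_pmf {..<d} dflt (\<lambda>_. J5 \<rho>) \<bind> (\<lambda>t. Gd d c (kd \<circ> t))) 2"
    unfolding Pi5[OF finite_lessThan] by (simp add: bind_assoc_pmf bind_return_pmf o_def)
  also have "\<dots> = pmf (map_pmf (\<lambda>t. kd \<circ> t) (Pi_pmf {..<d} dflt (\<lambda>_. J5 \<rho>)) \<bind> Gd d c) 2"
    by (simp add: bind_map_pmf)
  also have "map_pmf (\<lambda>t. kd \<circ> t) (Pi_pmf {..<d} dflt (\<lambda>_. J5 \<rho>)) = Pi_pmf {..<d} (False,False) (\<lambda>_. map_pmf kd (J5 \<rho>))"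
    by (rule Pi_pmf_map[symmetric]) (auto simp: dflt_def kd_def)
  also have "map_pmf kd (J5 \<rho>) = Dp \<rho>" unfolding Dp_def using assms by (intro map_kd_J5) auto
  finally show ?thesis .
qed

lemma Pi_curry:
  assumes A: "finite A" and B: "finite B"
  shows "map_pmf curry (Pi_pmf (A \<times> B) dflt (\<lambda>_. D)) = Pi_pmf A (\<lambda>_. dflt) (\<lambda>_. Pi_pmf B dflt (\<lambda>_. D))"
proof (rule pmf_eqI)
  fix G :: "'a \<Rightarrow> 'b \<Rightarrow> 'c"
  have "G = curry (case_prod G)" by simp
  then have "pmf (map_pmf curry (Pi_pmf (A \<times> B) dflt (\<lambda>_. D))) G
       = pmf (Pi_pmf (A \<times> B) dflt (\<lambda>_. D)) (case_prod G)"
    by (metis inj_on_def pmf_map_inj' curry_case_prod case_prod_curry)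
  also have "\<dots> = pmf (Pi_pmf A (\<lambda>_. dflt) (\<lambda>_. Pi_pmf B dflt (\<lambda>_. D))) G"
  proof (cases "\<forall>a b. (a,b) \<notin> A \<times> B \<longrightarrow> G a b = dflt")
    case True
    then have ga: "\<forall>a. a \<notin> A \<longrightarrow> G a = (\<lambda>_. dflt)" by auto
    have "pmf (Pi_pmf (A \<times> B) dflt (\<lambda>_. D)) (case_prod G) = (\<Prod>x\<in>A\<times>B. pmf D (case_prod G x))"
      using True A B by (subst pmf_Pi) auto
    also have "\<dots> = (\<Prod>a\<in>A. \<Prod>b\<in>B. pmf D (G a b))"
    proof -
    have "(\<lambda>x. pmf D (case_prod G x)) = case_prod (\<lambda>a b. pmf D (G a b))" by (auto simp: fun_eq_iff)
    then show ?thesis by (simp only: prod.cartesian_product)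
  qed
    also have "\<dots> = (\<Prod>a\<in>A. pmf (Pi_pmf B dflt (\<lambda>_. D)) (G a))"
      using True B by (intro prod.cong refl) (subst pmf_Pi, auto)
    also have "\<dots> = pmf (Pi_pmf A (\<lambda>_. dflt) (\<lambda>_. Pi_pmf B dflt (\<lambda>_. D))) G"
      using ga A by (subst pmf_Pi) auto
    finally show ?thesis .
  next
    case False
    then obtain a b where ab: "(a,b) \<notin> A \<times> B" "G a b \<noteq> dflt" by auto
    have l: "pmf (Pi_pmf (A \<times> B) dflt (\<lambda>_. D)) (case_prod G) = 0"
      using ab A B by (intro pmf_Pi_outside) auto
    have r: "pmf (Pi_pmf A (\<lambda>_. dflt) (\<lambda>_. Pi_pmf B dflt (\<lambda>_. D))) G = 0"
    proof (cases "a \<in> A")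
      case True
      then have bB: "b \<notin> B" using ab by auto
      have "pmf (Pi_pmf B dflt (\<lambda>_. D)) (G a) = 0"
        using ab bB B by (intro pmf_Pi_outside) auto
      then have "(\<Prod>a\<in>A. pmf (Pi_pmf B dflt (\<lambda>_. D)) (G a)) = 0"
        using True A by (intro prod_zero) auto
      then show ?thesis using A by (subst pmf_Pi) auto
    next
      case False
      have "G a \<noteq> (\<lambda>_. dflt)" using ab by auto
      then show ?thesis using False A by (intro pmf_Pi_outside) auto
    qed
    show ?thesis using l r by simp
  qed
  finally show "pmf (map_pmf curry (Pi_pmf (A \<times> B) dflt (\<lambda>_. D))) G = pmf (Pi_pmf A (\<lambda>_. dflt) (\<lambda>_. Pi_pmf B dflt (\<lambda>_. D))) G" .
qed

lemma dm_aux: "k < (L::nat) \<Longrightarrow> (a*L + k) div L = a \<and> (a*L + k) mod L = k"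
  by auto

lemma blk_card:
  assumes j: "j \<in> {1..c}" and L: "L = d div c" "0 < L"
  shows "card {i\<in>blk d c j. P (i div L + 1, i mod L)} = card {k\<in>{..<L}. P (j,k)}"
proof -
  have "{i\<in>blk d c j. P (i div L + 1, i mod L)} = (\<lambda>k. (j-1)*L + k) ` {k\<in>{..<L}. P (j,k)}"
  proof (intro equalityI subsetI)
    fix i assume i: "i \<in> {i\<in>blk d c j. P (i div L + 1, i mod L)}"
    define k where "k = i - (j-1)*L"
    have lo: "(j-1)*L \<le> i" and hi: "i < j*L" using i L by (auto simp: blk_def)
    have "j*L = (j-1)*L + L" using j by (cases j) auto
    then have kL: "k < L" using lo hi by (simp add: k_def)
    have ik: "i = (j-1)*L + k" using lo by (simp add: k_def)
    have "i div L + 1 = j" "i mod L = k" using dm_aux[OF kL, of "j-1"] ik j by auto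
    then show "i \<in> (\<lambda>k. (j-1)*L + k) ` {k\<in>{..<L}. P (j,k)}" using i kL ik by auto
  next
    fix i assume "i \<in> (\<lambda>k. (j-1)*L + k) ` {k\<in>{..<L}. P (j,k)}"
    then obtain k where k: "k < L" "P (j,k)" "i = (j-1)*L + k" by auto
    have "j*L = (j-1)*L + L" using j by (cases j) auto
    then have "i \<in> blk d c j" using k L by (auto simp: blk_def)
    moreover have "i div L + 1 = j" "i mod L = k" using dm_aux[OF k(1), of "j-1"] k j by auto
    ultimately show "i \<in> {i\<in>blk d c j. P (i div L + 1, i mod L)}" using k by auto
  qed
  moreover have "inj_on (\<lambda>k. (j-1)*L + k) {k\<in>{..<L}. P (j,k)}" by (auto simp: inj_on_def)
  ultimately show ?thesis by (simp add: card_image)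
qed

lemma bij_h:
  fixes d c L :: nat
  assumes "d = c * L" "0 < L"
  shows "bij_betw (\<lambda>i. (i div L + 1, i mod L)) {..<d} ({1..c} \<times> {..<L})"
proof (rule bij_betwI[where g="\<lambda>(j,k). (j-1)*L + k"])
  show "(\<lambda>i. (i div L + 1, i mod L)) \<in> {..<d} \<rightarrow> {1..c} \<times> {..<L}"
    using assms by (auto simp: less_mult_imp_div_less Suc_leI)
  show "(\<lambda>(j, k). (j - 1) * L + k) \<in> {1..c} \<times> {..<L} \<rightarrow> {..<d}"
  proof
    fix x assume "x \<in> {1..c} \<times> {..<L}"
    then obtain j k where x: "x = (j,k)" "1 \<le> j" "j \<le> c" "k < L" by auto
    have "(j-1)*L + k < (j-1)*L + L" using x by simp
    also have "\<dots> = j * L" using x by (cases j) auto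
    also have "\<dots> \<le> c * L" using x by simp
    finally show "(case x of (j, k) \<Rightarrow> (j - 1) * L + k) \<in> {..<d}" using x assms by simp
  qed
  show "(case (i div L + 1, i mod L) of (j, k) \<Rightarrow> (j - 1) * L + k) = i" if "i \<in> {..<d}" for i
    by simp
  fix y assume "y \<in> {1..c} \<times> {..<L}"
  then obtain j k where y: "y = (j,k)" "1 \<le> j" "k < L" by auto
  then show "((case y of (j, k) \<Rightarrow> (j - 1) * L + k) div L + 1, (case y of (j, k) \<Rightarrow> (j - 1) * L + k) mod L) = y"
    using dm_aux[OF y(3), of "j-1"] by auto
qed

definition V :: "nat \<Rightarrow> (nat \<Rightarrow> bool \<times> bool) \<Rightarrow> nat pmf" where
  "V L b = pmf_of_set (argset (card {i\<in>{..<L}. fst (b i)}) (card {i\<in>{..<L}. snd (b i)}))"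

definition QL :: "real \<Rightarrow> nat \<Rightarrow> nat pmf" where
  "QL \<rho> L = Pi_pmf {..<L} (False,False) (\<lambda>_. Dp \<rho>) \<bind> V L"

lemma reshape:
  assumes "c dvd d" "0 < d"
  shows "Pi_pmf {..<d} (False,False) (\<lambda>_. Dp \<rho>) \<bind> Gd d c
       = Pi_pmf {1..c} 0 (\<lambda>_. QL \<rho> (d div c)) \<bind> (\<lambda>U. pmf_of_set (vote_argmax c 2 U))"
proof -
  define L where "L = d div c"
  have c0: "c \<noteq> 0" using assms by auto
  have dL: "d = c * L" using assms by (simp add: L_def)
  have L0: "0 < L" using dL assms by (cases L) auto
  define h where "h = (\<lambda>i. (i div L + 1, i mod L))"
  define vote where "vote = (\<lambda>U. pmf_of_set (vote_argmax c 2 U))"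
  define G2 where "G2 = (\<lambda>B. Pi_pmf {1..c} 0 (\<lambda>j. V L (B j)) \<bind> vote)"
  have bij: "bij_betw h {..<d} ({1..c} \<times> {..<L})" unfolding h_def using dL L0 by (rule bij_h)
  have out: "h x \<notin> {1..c} \<times> {..<L}" if "x \<notin> {..<d}" for x
  proof -
    have "c * L \<le> x" using that dL by auto
    then have "(c * L) div L \<le> x div L" by (rule div_le_mono)
    then have "c \<le> x div L" using L0 by simp
    then show ?thesis by (simp add: h_def)
  qed
  have step1: "Pi_pmf {..<d} (False,False) (\<lambda>_. Dp \<rho>) = map_pmf (\<lambda>g. g \<circ> h) (Pi_pmf ({1..c} \<times> {..<L}) (False,False) (\<lambda>_. Dp \<rho>))"
    using bij out by (intro Pi_pmf_bij_betw) auto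
  have step2: "Gd d c (g \<circ> h) = G2 (curry g)" for g :: "nat \<times> nat \<Rightarrow> bool \<times> bool"
    unfolding Gd_def G2_def vote_def V_def
  proof (intro bind_pmf_cong refl Pi_pmf_cong)
    fix j assume j: "j \<in> {1..c}"
    have a: "card {i\<in>blk d c j. fst ((g \<circ> h) i)} = card {k\<in>{..<L}. fst (curry g j k)}"
      using blk_card[OF j L_def L0, of "\<lambda>x. fst (g x)"] by (simp add: h_def)
    have b: "card {i\<in>blk d c j. snd ((g \<circ> h) i)} = card {k\<in>{..<L}. snd (curry g j k)}"
      using blk_card[OF j L_def L0, of "\<lambda>x. snd (g x)"] by (simp add: h_def)
    show "pmf_of_set (argset (card {i \<in> blk d c j. fst ((g \<circ> h) i)}) (card {i \<in> blk d c j. snd ((g \<circ> h) i)})) =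
         pmf_of_set (argset (card {i \<in> {..<L}. fst (curry g j i)}) (card {i \<in> {..<L}. snd (curry g j i)}))"
      unfolding a b ..
  qed
  have "Pi_pmf {..<d} (False,False) (\<lambda>_. Dp \<rho>) \<bind> Gd d c
      = Pi_pmf ({1..c} \<times> {..<L}) (False,False) (\<lambda>_. Dp \<rho>) \<bind> (\<lambda>g. G2 (curry g))"
    unfolding step1 bind_map_pmf o_def[of "Gd d c"] step2 ..
  also have "\<dots> = map_pmf curry (Pi_pmf ({1..c} \<times> {..<L}) (False,False) (\<lambda>_. Dp \<rho>)) \<bind> G2"
    by (simp add: bind_map_pmf)
  also have "\<dots> = Pi_pmf {1..c} (\<lambda>_. (False,False)) (\<lambda>_. Pi_pmf {..<L} (False,False) (\<lambda>_. Dp \<rho>)) \<bind> G2"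
    by (subst Pi_curry) auto
  also have "\<dots> = (Pi_pmf {1..c} (\<lambda>_. (False,False)) (\<lambda>_. Pi_pmf {..<L} (False,False) (\<lambda>_. Dp \<rho>))
                    \<bind> (\<lambda>B. Pi_pmf {1..c} 0 (\<lambda>j. V L (B j)))) \<bind> vote"
    unfolding G2_def by (simp add: bind_assoc_pmf)
  also have "Pi_pmf {1..c} (\<lambda>_. (False,False)) (\<lambda>_. Pi_pmf {..<L} (False,False) (\<lambda>_. Dp \<rho>))
                    \<bind> (\<lambda>B. Pi_pmf {1..c} 0 (\<lambda>j. V L (B j))) = Pi_pmf {1..c} 0 (\<lambda>_. QL \<rho> L)"
    unfolding QL_def by (rule Pi_pmf_bind[symmetric]) auto
  finally show ?thesis by (simp add: vote_def L_def)
qed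


lemma map_eq2_bern: "map_pmf (\<lambda>v. v = (2::nat)) Q = bernoulli_pmf (pmf Q 2)"
proof (rule pmf_eqI)
  fix b :: bool
  have q0: "0 \<le> pmf Q 2" "pmf Q 2 \<le> 1" by (auto simp: pmf_le_1)
  have t: "pmf (map_pmf (\<lambda>v. v = 2) Q) True = pmf Q 2"
  proof -
    have "(\<lambda>v. v = (2::nat)) -` {True} = {2}" by auto
    then show ?thesis by (simp add: pmf_map measure_pmf_single)
  qed
  have f: "pmf (map_pmf (\<lambda>v. v = 2) Q) False = 1 - pmf Q 2"
  proof -
    have "(\<lambda>v. v = (2::nat)) -` {False} = UNIV - {2}" by auto
    then show ?thesis using measure_pmf.prob_compl[of "{2}" Q] by (simp add: pmf_map measure_pmf_single)
  qed
  show "pmf (map_pmf (\<lambda>v. v = 2) Q) b = pmf (bernoulli_pmf (pmf Q 2)) b"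
    using t f q0 by (cases b) auto
qed

lemma vote_argmax_eq:
  assumes "odd c" "\<And>j. j \<in> {1..c} \<Longrightarrow> U j \<in> {1,2::nat}"
  shows "vote_argmax c 2 U = {if c < 2 * card {j\<in>{1..c}. U j = 2} then 2 else 1}"
proof -
  define n1 where "n1 = card {j\<in>{1..c}. U j = 1}"
  define n2 where "n2 = card {j\<in>{1..c}. U j = 2}"
  have e: "{1..c} = {j\<in>{1..c}. U j = 1} \<union> {j\<in>{1..c}. U j = 2}" using assms(2) by fastforce
  have c2: "card ({j\<in>{1..c}. U j = 1} \<union> {j\<in>{1..c}. U j = 2}) = n1 + n2"
    unfolding n1_def n2_def by (rule card_Un_disjoint) auto
  have "card {1..c} = n1 + n2" using c2 by (simp only: e[symmetric])
  then have s: "n1 + n2 = c" by simp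
  have e12: "{1..2::nat} = {1,2}" by auto
  have vc: "vote_count c U 1 = n1" "vote_count c U 2 = n2" by (auto simp: vote_count_def n1_def n2_def)
  show ?thesis
  proof (cases "c < 2 * n2")
    case True
    then have "n1 < n2" using s by linarith
    then show ?thesis unfolding vote_argmax_def e12 n2_def[symmetric] using vc True by auto
  next
    case False
    have "2 * n2 \<noteq> c" using assms(1) by auto
    then have "n2 < n1" using s False by linarith
    then show ?thesis unfolding vote_argmax_def e12 n2_def[symmetric] using vc False by auto
  qed
qed

lemma vote_binomial:
  assumes "odd c" "set_pmf Q \<subseteq> {1,2}"
  shows "pmf (Pi_pmf {1..c} 0 (\<lambda>_. Q) \<bind> (\<lambda>U. pmf_of_set (vote_argmax c 2 U))) 2
       = measure_pmf.prob (binomial_pmf c (pmf Q 2)) {k. c < 2*k}"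
proof -
  define F where "F = (\<lambda>k. if c < 2 * k then 2 else (1::nat))"
  have "Pi_pmf {1..c} 0 (\<lambda>_. Q) \<bind> (\<lambda>U. pmf_of_set (vote_argmax c 2 U))
      = Pi_pmf {1..c} 0 (\<lambda>_. Q) \<bind> (\<lambda>U. return_pmf (F (card {j\<in>{1..c}. U j = 2})))"
  proof (intro bind_pmf_cong refl)
    fix U assume U: "U \<in> set_pmf (Pi_pmf {1..c} 0 (\<lambda>_. Q))"
    have "U j \<in> {1,2}" if "j \<in> {1..c}" for j
    proof -
      have "U \<in> PiE_dflt {1..c} 0 (set_pmf \<circ> (\<lambda>_. Q))"
        using subsetD[OF set_Pi_pmf_subset'[OF finite_atLeastAtMost] U] .
      then show ?thesis using that assms(2) by (auto simp: PiE_dflt_def)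
    qed
    then show "pmf_of_set (vote_argmax c 2 U) = return_pmf (F (card {j\<in>{1..c}. U j = 2}))"
      using vote_argmax_eq[OF assms(1), of U] by (simp add: F_def pmf_of_set_singleton)
  qed
  also have "\<dots> = map_pmf F (map_pmf (\<lambda>f. card {j\<in>{1..c}. f j}) (map_pmf (\<lambda>U j. U j = 2) (Pi_pmf {1..c} 0 (\<lambda>_. Q))))"
    by (simp add: map_pmf_def bind_assoc_pmf bind_return_pmf)
  also have "map_pmf (\<lambda>U j. U j = 2) (Pi_pmf {1..c} 0 (\<lambda>_. Q)) = Pi_pmf {1..c} False (\<lambda>_. map_pmf (\<lambda>v. v = 2) Q)"
    by (rule Pi_pmf_map[symmetric, unfolded o_def]) auto
  also have "\<dots> = Pi_pmf {1..c} False (\<lambda>_. bernoulli_pmf (pmf Q 2))" by (simp add: map_eq2_bern)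
  also have "map_pmf (\<lambda>f. card {j\<in>{1..c}. f j}) \<dots> = binomial_pmf c (pmf Q 2)"
    by (rule binomial_pmf_altdef'[symmetric]) (auto simp: pmf_le_1)
  finally have e: "Pi_pmf {1..c} 0 (\<lambda>_. Q) \<bind> (\<lambda>U. pmf_of_set (vote_argmax c 2 U)) = map_pmf F (binomial_pmf c (pmf Q 2))" .
  have "F -` {2} = {k. c < 2*k}" by (auto simp: F_def split: if_splits)
  then show ?thesis unfolding e pmf_map by simp
qed

definition Qb :: "real \<Rightarrow> nat \<Rightarrow> nat pmf" where
  "Qb p L = do {n1 \<leftarrow> binomial_pmf L p; n2 \<leftarrow> binomial_pmf L (1/2); pmf_of_set (argset n1 n2)}"

definition phi :: "nat \<Rightarrow> nat \<Rightarrow> real" where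
  "phi n1 n2 = (if n2 < n1 then 1 else if n1 < n2 then 0 else 1/2)"

lemma Pi_pair:
  assumes "finite A"
  shows "Pi_pmf A (d1,d2) (\<lambda>_. pair_pmf P1 P2) =
    do {f \<leftarrow> Pi_pmf A d1 (\<lambda>_. P1); g \<leftarrow> Pi_pmf A d2 (\<lambda>_. P2);
        return_pmf (\<lambda>x. if x \<in> A then (f x, g x) else (d1,d2))}"
  unfolding pair_pmf_def using assms
  by (simp add: Pi_pmf_bind[where d'=d1] Pi_pmf_bind[where d'=d2])

lemma QL_Qb:
  assumes "0 \<le> \<rho>" "\<rho> \<le> 1"
  shows "QL \<rho> L = Qb (2*\<rho>*(1-\<rho>)) L"
proof -
  have p: "0 \<le> 2*\<rho>*(1-\<rho>)" "2*\<rho>*(1-\<rho>) \<le> 1" using assms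
  proof -
    show "0 \<le> 2*\<rho>*(1-\<rho>)" using assms by simp
    have "0 \<le> (2*\<rho>-1)^2" by simp
    thus "2*\<rho>*(1-\<rho>) \<le> 1" by (simp add: power2_eq_square algebra_simps)
  qed
  have "QL \<rho> L = do {f \<leftarrow> Pi_pmf {..<L} False (\<lambda>_. bernoulli_pmf (2*\<rho>*(1-\<rho>)));
                      g \<leftarrow> Pi_pmf {..<L} False (\<lambda>_. bernoulli_pmf (1/2));
                      pmf_of_set (argset (card {i\<in>{..<L}. f i}) (card {i\<in>{..<L}. g i}))}"
  proof -
    have c: "\<And>x::nat\<Rightarrow>bool. {i. (i < L \<longrightarrow> x i) \<and> i < L} = {i. i < L \<and> x i}" by auto
    show ?thesis unfolding QL_def Dp_def Pi_pair[OF finite_lessThan] by (simp add: bind_assoc_pmf bind_return_pmf V_def c)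
  qed
  also have "\<dots> = do {n1 \<leftarrow> map_pmf (\<lambda>f. card {i\<in>{..<L}. f i}) (Pi_pmf {..<L} False (\<lambda>_. bernoulli_pmf (2*\<rho>*(1-\<rho>))));
                      n2 \<leftarrow> map_pmf (\<lambda>f. card {i\<in>{..<L}. f i}) (Pi_pmf {..<L} False (\<lambda>_. bernoulli_pmf (1/2)));
                      pmf_of_set (argset n1 n2)}"
    by (simp add: bind_map_pmf)
  also have "\<dots> = Qb (2*\<rho>*(1-\<rho>)) L"
    unfolding Qb_def using p
    by (subst (1 2) binomial_pmf_altdef'[where A="{..<L}" and dflt=False]) auto
  finally show ?thesis .
qed

lemma set_Qb: "set_pmf (Qb p L) \<subseteq> {1,2}"
  unfolding Qb_def by (auto simp: argset_def split: if_splits)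

lemma pmf_argset: "pmf (pmf_of_set (argset n1 n2)) 2 = phi n1 n2"
  by (auto simp: argset_def phi_def pmf_of_set_singleton)

lemma pmf_Qb:
  assumes "0 \<le> p" "p \<le> 1"
  shows "pmf (Qb p L) 2 = (\<Sum>n1\<le>L. (\<Sum>n2\<le>L. phi n1 n2 * pmf (binomial_pmf L (1/2)) n2) * pmf (binomial_pmf L p) n1)"
proof -
  have s: "set_pmf (binomial_pmf L q) \<subseteq> {..L}" if "0 \<le> q" "q \<le> 1" for q
    using that by (subst set_pmf_binomial_eq) auto
  have inner: "pmf (binomial_pmf L (1/2) \<bind> (\<lambda>n2. pmf_of_set (argset n1 n2))) 2
      = (\<Sum>n2\<le>L. phi n1 n2 * pmf (binomial_pmf L (1/2)) n2)" for n1
  proof -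
    have "pmf (binomial_pmf L (1/2) \<bind> (\<lambda>n2. pmf_of_set (argset n1 n2))) 2
        = (\<integral>n2. phi n1 n2 \<partial>measure_pmf (binomial_pmf L (1/2)))"
      by (simp add: pmf_bind pmf_argset)
    also have "\<dots> = (\<Sum>n2\<le>L. phi n1 n2 * pmf (binomial_pmf L (1/2)) n2)"
      by (rule integral_measure_pmf_real) (use s[of "1/2"] in auto)
    finally show ?thesis .
  qed
  have "pmf (Qb p L) 2 = (\<integral>n1. (\<Sum>n2\<le>L. phi n1 n2 * pmf (binomial_pmf L (1/2)) n2) \<partial>measure_pmf (binomial_pmf L p))"
    unfolding Qb_def pmf_bind[of "binomial_pmf L p"] inner ..
  also have "\<dots> = (\<Sum>n1\<le>L. (\<Sum>n2\<le>L. phi n1 n2 * pmf (binomial_pmf L (1/2)) n2) * pmf (binomial_pmf L p) n1)"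
    by (rule integral_measure_pmf_real) (use s[OF assms] in auto)
  finally show ?thesis .
qed
definition qsum :: "real \<Rightarrow> nat \<Rightarrow> real" where
  "qsum p L = (\<Sum>n1\<le>L. (\<Sum>n2\<le>L. phi n1 n2 * pmf (binomial_pmf L (1/2)) n2) * pmf (binomial_pmf L p) n1)"

lemma binom_sum:
  assumes "0 \<le> p" "p \<le> 1"
  shows "(\<Sum>n\<le>L. x^n * pmf (binomial_pmf L p) n) = (x*p + (1-p))^L"
proof -
  have "(x*p + (1-p))^L = (\<Sum>n\<le>L. of_nat (L choose n) * (x*p)^n * (1-p)^(L-n))"
    by (rule binomial_ring)
  also have "\<dots> = (\<Sum>n\<le>L. x^n * pmf (binomial_pmf L p) n)"
    using assms by (intro sum.cong refl) (simp add: power_mult_distrib)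
  finally show ?thesis ..
qed

lemma phi_le:
  assumes "1 \<le> x"
  shows "phi n1 n2 \<le> x^n1 * (1/x)^n2"
proof (cases "n2 \<le> n1")
  case True
  have x0: "x \<noteq> 0" using assms by auto
  have "x^n1 * (1/x)^n2 = x^(n1-n2) * (x^n2 * (1/x)^n2)"
    using True by (simp add: power_add[symmetric])
  also have "x^n2 * (1/x)^n2 = 1" using x0 by (simp add: power_one_over)
  finally have "x^n1 * (1/x)^n2 = x^(n1-n2)" by simp
  moreover have "1 \<le> x^(n1-n2)" using assms by (rule one_le_power)
  moreover have "phi n1 n2 \<le> 1" by (simp add: phi_def)
  ultimately show ?thesis by linarith
next
  case False
  then have "phi n1 n2 = 0" by (simp add: phi_def)
  moreover have "0 \<le> x^n1 * (1/x)^n2" using assms by simp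
  ultimately show ?thesis by simp
qed

lemma qsum_upper:
  assumes p: "0 < p" "p \<le> 1/2"
  shows "qsum p L \<le> (1/2 + sqrt (p*(1-p)))^L"
proof -
  define w where "w = sqrt (p*(1-p))"
  define x where "x = w / p"
  have s0: "0 < w" using p by (simp add: w_def)
  have s2: "w^2 = p*(1-p)" using p by (simp add: w_def)
  have "p*p \<le> p*(1-p)" using p by (intro mult_left_mono) auto
  then have "p \<le> w" unfolding w_def by (metis abs_of_pos p(1) real_sqrt_abs real_sqrt_le_mono power2_eq_square)
  then have x1: "1 \<le> x" using p by (simp add: x_def)
  have "qsum p L \<le> (\<Sum>n1\<le>L. (\<Sum>n2\<le>L. x^n1 * (1/x)^n2 * pmf (binomial_pmf L (1/2)) n2) * pmf (binomial_pmf L p) n1)"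
    unfolding qsum_def
    by (intro sum_mono mult_right_mono mult_right_mono phi_le[OF x1]) auto
  also have "\<dots> = (\<Sum>n1\<le>L. x^n1 * pmf (binomial_pmf L p) n1) * (\<Sum>n2\<le>L. (1/x)^n2 * pmf (binomial_pmf L (1/2)) n2)"
    unfolding sum_product by (intro sum.cong refl) (simp add: sum_distrib_left sum_distrib_right mult_ac)
  also have "\<dots> = (x*p + (1-p))^L * ((1/x)*(1/2) + (1-1/2))^L"
    using binom_sum[where p=p and L=L and x=x] binom_sum[where p="1/2" and L=L and x="1/x"] p by simp
  also have "\<dots> = ((x*p + (1-p)) * ((1/x)*(1/2) + (1-1/2)))^L"
    by (simp add: power_mult_distrib)
  also have "(x*p + (1-p)) * ((1/x)*(1/2) + (1-1/2)) = 1/2 + w"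
  proof -
    have xp: "x*p = w" using p by (simp add: x_def)
    have ix: "1/x = p/w" using p s0 by (simp add: x_def)
    have "(x*p + (1-p)) * ((1/x)*(1/2) + (1-1/2)) = (w + (1-p)) * (p/w + 1) / 2"
      unfolding xp ix by (simp add: field_simps)
    also have "\<dots> = ((w + (1-p)) * (p + w)) / (2 * w)"
      using s0 by (simp add: field_simps)
    also have "(w + (1-p)) * (p + w) = w*w + p*(1-p) + w"
      by (simp add: algebra_simps)
    also have "\<dots> = 2 * (w*w) + w" using s2 by (simp add: power2_eq_square)
    also have "(2 * (w*w) + w) / (2 * w) = 1/2 + w" using s0 by (simp add: field_simps)
    finally show ?thesis .
  qed
  finally show ?thesis by (simp add: w_def)
qed

lemma qsum_lower:
  assumes p: "0 \<le> p" "p \<le> 1"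
  shows "(1/2 + sqrt (p*(1-p)))^L / (2 * (real L + 1)) \<le> qsum p L"
proof -
  define w where "w = sqrt (p*(1-p))"
  define a where "a = (\<lambda>n. real (L choose n) * sqrt p ^ n * sqrt (1-p) ^ (L-n))"
  have w0: "0 \<le> w" using p by (simp add: w_def)
  have pmfhalf: "pmf (binomial_pmf L (1/2)) n = real (L choose n) * (1/2)^L" if "n \<le> L" for n
  proof -
    have "(1/2::real)^n * (1/2)^(L-n) = (1/2)^(n + (L-n))" by (simp add: power_add)
    also have "n + (L-n) = L" using that by simp
    finally show ?thesis by simp
  qed
  have pw: "(sqrt q ^ m)^2 = q^m" if "0 \<le> q" for q :: real and m :: nat
  proof -
    have "(sqrt q ^ m)^2 = (sqrt q ^ 2)^m" by (simp only: power_mult[symmetric] mult.commute)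
    then show ?thesis using that by simp
  qed
  have asq: "(a n)^2 = real (L choose n) * pmf (binomial_pmf L p) n" for n
  proof -
    have "(a n)^2 = real (L choose n)^2 * (sqrt p ^ n)^2 * (sqrt (1-p) ^ (L-n))^2"
      unfolding a_def by (simp add: power_mult_distrib)
    also have "\<dots> = real (L choose n)^2 * p ^ n * (1-p) ^ (L-n)" using p by (simp add: pw)
    finally show ?thesis using p by (simp add: power2_eq_square)
  qed
  have suma: "(\<Sum>n\<le>L. a n) = (sqrt p + sqrt (1-p))^L"
    unfolding a_def binomial_ring[of "sqrt p" "sqrt (1-p)" L] by (simp add: mult_ac)
  have sw: "sqrt p * sqrt (1-p) = w" by (simp add: w_def real_sqrt_mult)
  have sq1: "(sqrt p + sqrt (1-p))^2 = 1 + 2*w"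
  proof -
    have "(sqrt p + sqrt (1-p))^2 = (sqrt p)^2 + (sqrt (1-p))^2 + 2 * (sqrt p * sqrt (1-p))"
      by (simp add: power2_eq_square algebra_simps)
    then show ?thesis using p sw by simp
  qed
  have cs: "(\<Sum>n\<le>L. a n)^2 \<le> (\<Sum>n\<le>L. (a n)^2) * card {..L}"
    by (rule sum_squared_le_sum_of_squares)
  have "(\<Sum>n\<le>L. a n)^2 = (1 + 2*w)^L"
    unfolding suma power_mult[symmetric] mult.commute[of L 2] power_mult sq1 ..
  with cs have cs2: "(1 + 2*w)^L / (real L + 1) \<le> (\<Sum>n\<le>L. (a n)^2)"
    by (simp add: divide_le_eq add.commute)
  have "qsum p L \<ge> (\<Sum>n\<le>L. (phi n n * pmf (binomial_pmf L (1/2)) n) * pmf (binomial_pmf L p) n)"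
    unfolding qsum_def
  proof (intro sum_mono mult_right_mono)
    fix n assume "n \<in> {..L}"
    then show "phi n n * pmf (binomial_pmf L (1/2)) n \<le> (\<Sum>n2\<le>L. phi n n2 * pmf (binomial_pmf L (1/2)) n2)"
      by (intro member_le_sum[where f="\<lambda>n2. phi n n2 * pmf (binomial_pmf L (1/2)) n2"]) (auto simp: phi_def)
  qed auto
  also have "(\<Sum>n\<le>L. (phi n n * pmf (binomial_pmf L (1/2)) n) * pmf (binomial_pmf L p) n)
           = (1/2) * (1/2)^L * (\<Sum>n\<le>L. (a n)^2)"
    unfolding sum_distrib_left
    by (intro sum.cong refl) (use p in \<open>simp add: pmfhalf asq phi_def del: pmf_binomial\<close>)
  finally have "(1/2) * (1/2)^L * (\<Sum>n\<le>L. (a n)^2) \<le> qsum p L" .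
  moreover have "(1/2) * (1/2)^L * ((1 + 2*w)^L / (real L + 1)) \<le> (1/2) * (1/2)^L * (\<Sum>n\<le>L. (a n)^2)"
    using cs2 by (intro mult_left_mono) auto
  moreover have "(1/2) * (1/2)^L * ((1 + 2*w)^L / (real L + 1)) = (1/2 + w)^L / (2 * (real L + 1))"
  proof -
    have "(1/2::real)^L * (1 + 2*w)^L = (1/2 + w)^L" by (simp add: power_mult_distrib[symmetric] algebra_simps)
    then show ?thesis by (simp add: field_simps)
  qed
  ultimately show ?thesis unfolding w_def by linarith
qed


lemma amgm_pm:
  fixes p u w :: real
  assumes "0 < p" "p < 1" "0 < u" "w = sqrt (p*(1-p))"
  shows "2 * w \<le> p * u + (1-p) / u"
proof -
  have w0: "0 \<le> w" using assms by simp
  have w2: "w^2 = p*(1-p)" using assms by simp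
  have pos: "0 \<le> p * u + (1-p) / u" using assms by simp
  have AB: "(p * u) * ((1-p) / u) = p*(1-p)" using assms(3) by simp
  have "(p * u + (1-p) / u)^2 = (p * u - (1-p) / u)^2 + 4 * ((p * u) * ((1-p) / u))"
    by (simp add: power2_eq_square algebra_simps)
  also have "\<dots> = (p * u - (1-p) / u)^2 + (2*w)^2" unfolding AB using w2 by (simp add: power2_eq_square)
  finally have "(2*w)^2 \<le> (p * u + (1-p) / u)^2" by simp
  from power2_le_imp_le[OF this pos] show ?thesis .
qed

lemma rate_I_eq:
  assumes "0 < \<rho>" "\<rho> < 1/2"
  shows "rate_I \<rho> = - ln (1/2 + sqrt ((2*\<rho>*(1-\<rho>)) * (1 - 2*\<rho>*(1-\<rho>))))"
proof -
  define p where "p = 2*\<rho>*(1-\<rho>)"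
  define w where "w = sqrt (p*(1-p))"
  have p0: "0 < p" using assms by (simp add: p_def)
  have p1: "p < 1"
  proof -
    have "0 \<le> (2*\<rho>-1)^2" by simp
    moreover have "(2*\<rho>-1)^2 \<noteq> 0" using assms by simp
    ultimately have "0 < (2*\<rho>-1)^2" by linarith
    then show ?thesis by (simp add: p_def power2_eq_square algebra_simps)
  qed
  have w0: "0 < w" using p0 p1 by (simp add: w_def)
  define f where "f = (\<lambda>t::real. \<rho> * (1 - \<rho>) * exp t + 1/2 + 1/2 * (1 - 2*\<rho> + 2*\<rho>^2) * exp (-t))"
  have f_eq: "f t = 1/2 + (p * exp t + (1-p) / exp t) / 2" for t
    by (simp add: f_def p_def exp_minus field_simps power2_eq_square)
  have fge: "1/2 + w \<le> f t" for t
    using amgm_pm[OF p0 p1 exp_gt_zero w_def, of t] unfolding f_eq by simp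
  have fmin: "f (ln (w/p)) = 1/2 + w"
  proof -
    have e: "exp (ln (w/p)) = w/p" using w0 p0 by simp
    have "p * (w/p) = w" using p0 by simp
    moreover have "(1-p) / (w/p) = w"
    proof -
      have "w^2 = p*(1-p)" using p0 p1 by (simp add: w_def)
      then show ?thesis using w0 p0 by (simp add: field_simps power2_eq_square)
    qed
    ultimately show ?thesis unfolding f_eq e by simp
  qed
  have "(INF t. ln (f t)) = ln (1/2 + w)"
  proof (rule cInf_eq_minimum)
    show "ln (1/2 + w) \<in> range (\<lambda>t. ln (f t))" using fmin by (metis rangeI)
    fix x assume "x \<in> range (\<lambda>t. ln (f t))"
    then obtain t where "x = ln (f t)" by auto
    then show "ln (1/2 + w) \<le> x" using fge[of t] w0 by simp
  qed
  moreover have "rate_I \<rho> = - (INF t. ln (f t))" by (simp only: rate_I_def f_def)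
  ultimately show ?thesis by (simp add: w_def p_def)
qed

lemma tail_sum:
  assumes "0 \<le> q" "q \<le> 1"
  shows "measure_pmf.prob (binomial_pmf c q) {k. c < 2*k} = (\<Sum>k\<in>{k. c < 2*k \<and> k \<le> c}. pmf (binomial_pmf c q) k)"
proof -
  have sub: "set_pmf (binomial_pmf c q) \<subseteq> {..c}" using assms by (subst set_pmf_binomial_eq) auto
  have "measure_pmf.prob (binomial_pmf c q) {k. c < 2*k} = measure_pmf.prob (binomial_pmf c q) {k. c < 2*k \<and> k \<le> c}"
    using sub by (intro measure_prob_cong_0) (auto simp: set_pmf_eq)
  also have "\<dots> = (\<Sum>k\<in>{k. c < 2*k \<and> k \<le> c}. pmf (binomial_pmf c q) k)"
    by (rule measure_measure_pmf_finite) auto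
  finally show ?thesis .
qed

lemma tail_lower:
  assumes "0 \<le> q" "q \<le> 1" "odd c"
  shows "q ^ ((c+1) div 2) * (1-q) ^ (c - (c+1) div 2) \<le> measure_pmf.prob (binomial_pmf c q) {k. c < 2*k}"
proof -
  define h where "h = (c+1) div 2"
  have hin: "h \<in> {k. c < 2*k \<and> k \<le> c}" using assms(3) by (auto simp: h_def elim: oddE)
  have "q ^ h * (1-q) ^ (c - h) \<le> real (c choose h) * q ^ h * (1-q) ^ (c - h)"
  proof -
    have "1 \<le> real (c choose h)" using hin by (simp add: Suc_leI)
    moreover have "0 \<le> q ^ h * (1-q) ^ (c - h)" using assms by simp
    ultimately have "1 * (q ^ h * (1-q) ^ (c - h)) \<le> real (c choose h) * (q ^ h * (1-q) ^ (c - h))"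
      by (rule mult_right_mono)
    then show ?thesis by (simp add: mult.assoc)
  qed
  also have "\<dots> = pmf (binomial_pmf c q) h" using assms by simp
  also have "\<dots> \<le> (\<Sum>k\<in>{k. c < 2*k \<and> k \<le> c}. pmf (binomial_pmf c q) k)"
    by (rule member_le_sum[OF hin]) auto
  finally show ?thesis unfolding tail_sum[OF assms(1,2)] h_def .
qed

lemma tail_upper:
  assumes "0 \<le> q" "q \<le> 1" "odd c"
  shows "measure_pmf.prob (binomial_pmf c q) {k. c < 2*k} \<le> 2^c * q ^ ((c+1) div 2)"
proof -
  define h where "h = (c+1) div 2"
  have "(\<Sum>k\<in>{k. c < 2*k \<and> k \<le> c}. pmf (binomial_pmf c q) k) \<le> (\<Sum>k\<in>{k. c < 2*k \<and> k \<le> c}. real (c choose k) * q ^ h)"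
  proof (intro sum_mono)
    fix k assume k: "k \<in> {k. c < 2*k \<and> k \<le> c}"
    then have "h \<le> k" using assms(3) by (auto simp: h_def elim: oddE)
    then have "q ^ k \<le> q ^ h" using assms by (intro power_decreasing) auto
    moreover have "(1-q) ^ (c-k) \<le> 1" using assms by (intro power_le_one) auto
    moreover have "0 \<le> q ^ k" using assms by simp
    ultimately have "q ^ k * (1-q) ^ (c-k) \<le> q ^ h * 1" using assms
      by (intro mult_mono) auto
    then have "q ^ k * (1-q) ^ (c-k) \<le> q ^ h" by simp
    then show "pmf (binomial_pmf c q) k \<le> real (c choose k) * q ^ h" using assms
      by (simp add: mult.assoc mult_left_mono)
  qed
  also have "\<dots> \<le> (\<Sum>k\<le>c. real (c choose k) * q ^ h)"
    using assms by (intro sum_mono2) auto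
  also have "\<dots> = 2^c * q ^ h"
  proof -
    have "(\<Sum>k\<le>c. real (c choose k)) = 2^c" proof -
      have "real (\<Sum>k\<le>c. c choose k) = real (2^c)" by (simp only: choose_row_sum)
      then show ?thesis by simp
    qed
    then show ?thesis by (simp add: sum_distrib_right[symmetric])
  qed
  finally show ?thesis unfolding tail_sum[OF assms(1,2)] h_def .
qed
lemma g_lim: "((\<lambda>y::real. ln (2*(y+1)) / y) \<longlongrightarrow> 0) at_top"
proof -
  have f: "filterlim (\<lambda>y::real. 2*(y+1)) at_top at_top"
    unfolding filterlim_at_top
  proof
    fix Z :: real
    show "eventually (\<lambda>y. Z \<le> 2*(y+1)) at_top"
      using eventually_ge_at_top[of "Z/2"] by eventually_elim simp
  qed
  have a: "((\<lambda>y::real. ln (2*(y+1)) / (2*(y+1))) \<longlongrightarrow> 0) at_top"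
    using filterlim_compose[OF ln_x_over_x_tendsto_0 f] by (simp add: o_def)
  have b: "((\<lambda>y::real. 2 + 2 * inverse y) \<longlongrightarrow> 2 + 2 * 0) at_top"
    by (intro tendsto_intros tendsto_inverse_0_at_top filterlim_ident)
  have "((\<lambda>y::real. ln (2*(y+1)) / (2*(y+1)) * (2 + 2 * inverse y)) \<longlongrightarrow> 0 * (2 + 2*0)) at_top"
    by (rule tendsto_mult[OF a b])
  then have c: "((\<lambda>y::real. ln (2*(y+1)) / (2*(y+1)) * (2 + 2 * inverse y)) \<longlongrightarrow> 0) at_top" by simp
  show ?thesis
  proof (rule tendsto_cong[THEN iffD1, OF _ c])
    show "\<forall>\<^sub>F y in at_top. ln (2*((y::real)+1)) / (2*(y+1)) * (2 + 2 * inverse y) = ln (2*(y+1)) / y"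
      unfolding eventually_at_top_linorder
    proof (intro exI allI impI)
      fix y :: real assume "1 \<le> y"
      then have e: "2 + 2 * inverse y = 2*(y+1) / y" by (simp add: field_simps)
      have "ln (2*(y+1)) / (2*(y+1)) * (2*(y+1) / y) = ln (2*(y+1)) / y" using \<open>1 \<le> y\<close> by simp
      then show "ln (2*(y+1)) / (2*(y+1)) * (2 + 2 * inverse y) = ln (2*(y+1)) / y" unfolding e .
    qed
  qed
qed

lemma core_bounds:
  fixes c L :: nat and r q E :: real
  assumes r: "0 < r" "r < 1" and c: "odd c" and L: "1 \<le> L"
    and q: "r^L / (2 * (real L + 1)) \<le> q" "q \<le> r^L"
    and Elo: "q ^ ((c+1) div 2) * (1-q) ^ (c - (c+1) div 2) \<le> E"
    and Eup: "E \<le> 2^c * q ^ ((c+1) div 2)"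
  shows "(1/2 + inverse (real c)/2) * (ln r - ln (2*(real L+1)) / real L) + (1/2 - inverse (real c)/2) * (ln (1-r) * inverse (real L))
           \<le> ln E / real (c * L)"
    and "ln E / real (c * L) \<le> ln 2 * inverse (real L) + (1/2 + inverse (real c)/2) * ln r"
proof -
  define h where "h = (c+1) div 2"
  have c1: "1 \<le> c" using c by (cases c) auto
  have hr: "real h = (real c + 1)/2" using c unfolding h_def by (auto elim!: oddE)
  have chr: "real (c - h) = (real c - 1)/2" using c hr unfolding h_def by (auto elim!: oddE simp: of_nat_diff)
  have rL0: "0 < r^L" using r by simp
  have q0: "0 < q" using q(1) rL0 by (smt (verit) divide_pos_pos of_nat_0_le_iff)
  have rLr: "r^L \<le> r" using r L by (metis power_decreasing power_one_right less_imp_le)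
  have q1: "q < 1" using q(2) rLr r by linarith
  have lnq_lo: "real L * ln r - ln (2*(real L+1)) \<le> ln q"
  proof -
    have "ln (r^L / (2 * (real L + 1))) \<le> ln q" using q(1) q0 rL0 by (subst ln_le_cancel_iff) auto
    moreover have "ln (r^L / (2 * (real L + 1))) = real L * ln r - ln (2*(real L+1))"
      using r by (simp add: ln_div ln_realpow)
    ultimately show ?thesis by simp
  qed
  have lnq_up: "ln q \<le> real L * ln r"
  proof -
    have "ln q \<le> ln (r^L)" using q(2) q0 by simp
    then show ?thesis using r by (simp add: ln_realpow)
  qed
  have ln1q: "ln (1-r) \<le> ln (1-q)" using q(2) rLr q1 r by simp
  have P0: "0 < q ^ h * (1-q) ^ (c - h)" using q0 q1 by simp
  have E0: "0 < E" using Elo P0 unfolding h_def by linarith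
  have cL0: "0 < real (c * L)" using c1 L by simp
  have "ln (q ^ h * (1-q) ^ (c - h)) \<le> ln E" using Elo P0 E0 unfolding h_def[symmetric] by simp
  moreover have "ln (q ^ h * (1-q) ^ (c - h)) = real h * ln q + real (c-h) * ln (1-q)"
    using q0 q1 by (simp add: ln_mult ln_realpow)
  moreover have "real h * (real L * ln r - ln (2*(real L+1))) + real (c-h) * ln (1-r)
                 \<le> real h * ln q + real (c-h) * ln (1-q)"
    using lnq_lo ln1q by (intro add_mono mult_left_mono) auto
  ultimately have lo: "real h * (real L * ln r - ln (2*(real L+1))) + real (c-h) * ln (1-r) \<le> ln E" by linarith
  have "(1/2 + inverse (real c)/2) * (ln r - ln (2*(real L+1)) / real L) + (1/2 - inverse (real c)/2) * (ln (1-r) * inverse (real L))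
      = (real h * (real L * ln r - ln (2*(real L+1))) + real (c-h) * ln (1-r)) / real (c * L)"
    using c1 L unfolding hr chr by (simp add: field_simps)
  also have "\<dots> \<le> ln E / real (c * L)" using lo cL0 by (intro divide_right_mono) auto
  finally show "(1/2 + inverse (real c)/2) * (ln r - ln (2*(real L+1)) / real L) + (1/2 - inverse (real c)/2) * (ln (1-r) * inverse (real L))
           \<le> ln E / real (c * L)" .
  have "ln E \<le> ln (2^c * q ^ h)" using Eup E0 unfolding h_def[symmetric] by simp
  also have "\<dots> = real c * ln 2 + real h * ln q" using q0 by (simp add: ln_mult ln_realpow)
  also have "\<dots> \<le> real c * ln 2 + real h * (real L * ln r)" using lnq_up by (intro add_left_mono mult_left_mono) auto
  finally have up: "ln E \<le> real c * ln 2 + real h * (real L * ln r)" .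
  have "ln E / real (c * L) \<le> (real c * ln 2 + real h * (real L * ln r)) / real (c * L)"
    using up cL0 by (intro divide_right_mono) auto
  also have "\<dots> = ln 2 * inverse (real L) + (1/2 + inverse (real c)/2) * ln r"
    using c1 L unfolding hr by (simp add: field_simps)
  finally show "ln E / real (c * L) \<le> ln 2 * inverse (real L) + (1/2 + inverse (real c)/2) * ln r" .
qed

lemma lim_gen:
  fixes Q :: "nat \<Rightarrow> real" and c L :: "nat \<Rightarrow> nat"
  assumes r: "0 < r" "r < 1"
    and Qb: "\<And>L. 1 \<le> L \<Longrightarrow> r^L / (2 * (real L + 1)) \<le> Q L \<and> Q L \<le> r^L"
    and c: "\<And>n. odd (c n)" and L1: "\<And>n. 1 \<le> L n"
    and iL: "(\<lambda>n. inverse (real (L n))) \<longlonglongrightarrow> 0"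
    and ic: "(\<lambda>n. inverse (real (c n))) \<longlonglongrightarrow> il"
  shows "(\<lambda>n. ln (measure_pmf.prob (binomial_pmf (c n) (Q (L n))) {k. c n < 2*k}) / real (c n * L n))
           \<longlonglongrightarrow> (1/2 + il/2) * ln r"
proof -
  have pos: "\<forall>\<^sub>F n in sequentially. 0 < inverse (real (L n))"
  proof (intro always_eventually allI)
    fix n show "0 < inverse (real (L n))" using L1[of n] by simp
  qed
  have yL: "filterlim (\<lambda>n. real (L n)) at_top sequentially"
    using filterlim_inverse_at_top[OF iL pos] by simp
  have g: "(\<lambda>n. ln (2*(real (L n)+1)) / real (L n)) \<longlonglongrightarrow> 0"
    using filterlim_compose[OF g_lim yL] by (simp add: o_def)
  define E where "E = (\<lambda>n. measure_pmf.prob (binomial_pmf (c n) (Q (L n))) {k. c n < 2*k})"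
  have bnds: "(1/2 + inverse (real (c n))/2) * (ln r - ln (2*(real (L n)+1)) / real (L n)) + (1/2 - inverse (real (c n))/2) * (ln (1-r) * inverse (real (L n)))
           \<le> ln (E n) / real (c n * L n) \<and>
           ln (E n) / real (c n * L n) \<le> ln 2 * inverse (real (L n)) + (1/2 + inverse (real (c n))/2) * ln r" for n
  proof -
    have q: "r^(L n) / (2 * (real (L n) + 1)) \<le> Q (L n)" "Q (L n) \<le> r^(L n)" using Qb[OF L1[of n]] by auto
    have q0: "0 \<le> Q (L n)" using q(1) r by (smt (verit) divide_nonneg_nonneg of_nat_0_le_iff zero_le_power)
    have q1: "Q (L n) \<le> 1" using q(2) r by (smt (verit) power_le_one)
    show ?thesis
      using core_bounds[OF r c L1 q tail_lower[OF q0 q1 c] tail_upper[OF q0 q1 c]] unfolding E_def by auto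
  qed
  have lo: "(\<lambda>n. (1/2 + inverse (real (c n))/2) * (ln r - ln (2*(real (L n)+1)) / real (L n)) + (1/2 - inverse (real (c n))/2) * (ln (1-r) * inverse (real (L n))))
           \<longlonglongrightarrow> (1/2 + il/2) * (ln r - 0) + (1/2 - il/2) * (ln (1-r) * 0)"
    by (intro tendsto_intros ic iL g) auto
  have up: "(\<lambda>n. ln 2 * inverse (real (L n)) + (1/2 + inverse (real (c n))/2) * ln r)
           \<longlonglongrightarrow> ln 2 * 0 + (1/2 + il/2) * ln r"
    by (intro tendsto_intros ic iL) auto
  have lo': "(\<lambda>n. (1/2 + inverse (real (c n))/2) * (ln r - ln (2*(real (L n)+1)) / real (L n)) + (1/2 - inverse (real (c n))/2) * (ln (1-r) * inverse (real (L n))))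
           \<longlonglongrightarrow> (1/2 + il/2) * ln r" using lo by simp
  have up': "(\<lambda>n. ln 2 * inverse (real (L n)) + (1/2 + inverse (real (c n))/2) * ln r)
           \<longlonglongrightarrow> (1/2 + il/2) * ln r" using up by simp
  have "(\<lambda>n. ln (E n) / real (c n * L n)) \<longlonglongrightarrow> (1/2 + il/2) * ln r"
    by (rule tendsto_sandwich[OF always_eventually always_eventually lo' up'])
       (intro allI conjunct1[OF bnds] conjunct2[OF bnds])+
  then show ?thesis unfolding E_def .
qed

theorem proposition1:
  fixes \<rho> :: real
  assumes "0 < \<rho>" and "\<rho> < 1/2"
  shows "0 < rate_I \<rho>
    \<and> (\<lambda>n. ln (modelA_err \<rho> (2*n+1) 1) / real (2*n+1)) \<longlonglongrightarrow> - rate_I \<rho>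
    \<and> (\<forall>ds cs :: nat \<Rightarrow> nat.
          (\<forall>n. cs n dvd ds n \<and> odd (cs n) \<and> odd (ds n div cs n))
          \<and> filterlim ds at_top sequentially
          \<and> filterlim cs at_top sequentially
          \<and> (\<lambda>n. real (cs n) / real (ds n)) \<longlonglongrightarrow> 0
          \<longrightarrow> (\<lambda>n. ln (modelA_err \<rho> (ds n) (cs n)) / real (ds n)) \<longlonglongrightarrow> - rate_I \<rho> / 2)"
proof -
  define p where "p = 2*\<rho>*(1-\<rho>)"
  define w where "w = sqrt (p*(1-p))"
  define r where "r = 1/2 + w"
  define Q where "Q = (\<lambda>L. qsum p L)"
  have p0: "0 < p" using assms by (simp add: p_def)
  have p2: "p < 1/2"
  proof -
    have "0 < (1 - 2*\<rho>)^2" using assms by simp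
    then show ?thesis by (simp add: p_def power2_eq_square algebra_simps)
  qed
  have w0: "0 < w" using p0 p2 by (simp add: w_def)
  have w1: "w < 1/2"
  proof -
    have "0 < (1 - 2*p)^2" using p2 by simp
    then have "p*(1-p) < (1/2)^2" by (simp add: power2_eq_square algebra_simps)
    then have "sqrt (p*(1-p)) < sqrt ((1/2)^2)" by (subst real_sqrt_less_iff) 
    then show ?thesis by (simp add: w_def)
  qed
  have r0: "0 < r" and r1: "r < 1" using w0 w1 by (auto simp: r_def)
  have rate: "rate_I \<rho> = - ln r"
    using rate_I_eq[OF assms] by (simp add: r_def w_def p_def)
  have Qb: "r^L / (2 * (real L + 1)) \<le> Q L \<and> Q L \<le> r^L" if "1 \<le> L" for L
    using qsum_lower[of p L] qsum_upper[of p L] p0 p2 by (simp add: Q_def r_def w_def)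
  have struct: "modelA_err \<rho> d c = measure_pmf.prob (binomial_pmf c (Q (d div c))) {k. c < 2*k}"
    if "c dvd d" "0 < d" "odd c" for d c
  proof -
    have r01: "0 \<le> \<rho>" "\<rho> \<le> 1" using assms by auto
    have "modelA_err \<rho> d c = pmf (Pi_pmf {1..c} 0 (\<lambda>_. QL \<rho> (d div c)) \<bind> (\<lambda>U. pmf_of_set (vote_argmax c 2 U))) 2"
      unfolding modelA_reduce[OF that(1) r01] reshape[OF that(1,2)] ..
    also have "\<dots> = measure_pmf.prob (binomial_pmf c (pmf (QL \<rho> (d div c)) 2)) {k. c < 2*k}"
      by (rule vote_binomial[OF that(3)]) (unfold QL_Qb[OF r01], rule set_Qb)
    also have "pmf (QL \<rho> (d div c)) 2 = Q (d div c)"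
      unfolding QL_Qb[OF r01] Q_def qsum_def p_def using p0 p2
      by (subst pmf_Qb) (auto simp: p_def)
    finally show ?thesis .
  qed
  have part1: "(\<lambda>n. ln (modelA_err \<rho> (2*n+1) 1) / real (2*n+1)) \<longlonglongrightarrow> - rate_I \<rho>"
  proof -
    have fl: "filterlim (\<lambda>n. real (2*n+1)) at_top sequentially"
      by (rule filterlim_at_top_mono[OF filterlim_real_sequentially]) auto
    have "(\<lambda>n. ln (measure_pmf.prob (binomial_pmf ((\<lambda>_. 1::nat) n) (Q ((\<lambda>n. 2*n+1) n))) {k. (\<lambda>_. 1::nat) n < 2*k})
             / real ((\<lambda>_. 1::nat) n * (\<lambda>n. 2*n+1) n)) \<longlonglongrightarrow> (1/2 + 1/2) * ln r"
    proof (rule lim_gen[OF r0 r1 Qb, where il=1])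
      show "(\<lambda>n. inverse (real ((\<lambda>n. 2*n+1) n))) \<longlonglongrightarrow> 0"
        using tendsto_inverse_0_at_top[OF fl] by simp
    qed auto
    moreover have "modelA_err \<rho> (2*n+1) 1 = measure_pmf.prob (binomial_pmf 1 (Q (2*n+1))) {k. 1 < 2*k}" for n
      using struct[of 1 "2*n+1"] by simp
    ultimately show ?thesis by (simp add: rate)
  qed
  have part2: "(\<lambda>n. ln (modelA_err \<rho> (ds n) (cs n)) / real (ds n)) \<longlonglongrightarrow> - rate_I \<rho> / 2"
    if h: "\<forall>n. cs n dvd ds n \<and> odd (cs n) \<and> odd (ds n div cs n)"
       "filterlim ds at_top sequentially" "filterlim cs at_top sequentially"
       "(\<lambda>n. real (cs n) / real (ds n)) \<longlonglongrightarrow> 0" for ds cs :: "nat \<Rightarrow> nat"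
  proof -
    define L where "L = (\<lambda>n. ds n div cs n)"
    have dsL: "ds n = cs n * L n" for n using h(1) by (simp add: L_def)
    have L1: "1 \<le> L n" for n using h(1)[rule_format, of n] unfolding L_def by (cases "ds n div cs n") auto
    have c1: "1 \<le> cs n" for n using h(1)[rule_format, of n] by (cases "cs n") auto
    have d0: "0 < ds n" for n using dsL[of n] L1[of n] c1[of n] by simp
    have iL: "(\<lambda>n. inverse (real (L n))) \<longlonglongrightarrow> 0"
    proof -
      have "real (cs n) / real (ds n) = inverse (real (L n))" for n
        using dsL[of n] c1[of n] by (simp add: field_simps)
      then show ?thesis using h(4) by simp
    qed
    have ic: "(\<lambda>n. inverse (real (cs n))) \<longlonglongrightarrow> 0"
      by (rule tendsto_inverse_0_at_top[OF filterlim_compose[OF filterlim_real_sequentially h(3)]])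
    have "(\<lambda>n. ln (measure_pmf.prob (binomial_pmf (cs n) (Q (L n))) {k. cs n < 2*k}) / real (cs n * L n))
           \<longlonglongrightarrow> (1/2 + 0/2) * ln r"
      by (rule lim_gen[OF r0 r1 Qb _ L1 iL ic]) (use h(1) in auto)
    moreover have "modelA_err \<rho> (ds n) (cs n) = measure_pmf.prob (binomial_pmf (cs n) (Q (L n))) {k. cs n < 2*k}" for n
      using struct[of "cs n" "ds n"] h(1) d0[of n] by (simp add: L_def)
    ultimately show ?thesis using dsL by (simp add: rate)
  qed
  show ?thesis
    using part1 part2 r1 r0 by (auto simp: rate)
qed

end
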